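(* Fix $p_{NS}=p_{min}\in(0,1)$. Let $P$ and $Q$ be semi-distributions on $\mathcal{I}=\{1,\dots,k\}$ with $P$ non-empty, and use the perfect NS-marker $\mathrm{isNS}_P$ with respect to $P$. Then $$\mathrm{LogLossNS}(Q\mid P)=H(\mathrm{DI}(P))+\mathrm{KL}_{NS}(P\,\|\,Q).$$
   Context: A semi-distribution (SD) on $\mathcal{I}$ is $W:\mathcal{I}\to[0,1]$ with $a(W):=\sum_i W(i)\le 1$; write $u(W):=1-a(W)$ and $\sup(W)=\{i:W(i)>0\}$; $W$ is non-empty if $a(W)>0$. Entropy: $H(D)=-\sum_i D(i)\ln D(i)$ (terms with $D(i)=0$ omitted). Drawing $o\sim P$ from a non-empty SD $P$: with probability $a(P)$, draw $o$ from the distribution $P/a(P)$; with probability $u(P)$, output a fresh unique "noise" item not in $\mathcal{I}$ (never generated before). The perfect NS-marker $\mathrm{isNS}_P(o)$ is true iff $o\notin\sup(P)$. $\mathrm{ScaleDrop}(W,\alpha,p_{min})$ is the SD $W'$ with $W'(i)=\alpha W(i)$ if $\alpha W(i)\ge p_{min}$ and $W'(i)=0$ otherwise. $\mathrm{FC}(W)$: let $W'=\mathrm{ScaleDrop}(W,1,p_{min})$; if $a(W')\le 1-p_{NS}$ return $W'$; otherwise return $\mathrm{ScaleDrop}(W',(1-p_{NS})/a(W'),p_{min})$. $\mathrm{loglossRuleNS}(o,W,m)$ for an observation $o$, map $W$ and Boolean $m$: let $W'=\mathrm{FC}(W)$ and $p=W'(o)$ (0 if $o$ is not in $\mathcal{I}$);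 if $p>0$ (equivalently $p\ge p_{min}$ and positive) return $-\ln p$; otherwise, if $m$ is false return $-\ln p_{NS}$, and if $m$ is true return $-\ln u(W')$. Then $\mathrm{LogLossNS}(Q\mid P):=\mathbb{E}_{o\sim P}[\mathrm{loglossRuleNS}(o,Q,\mathrm{isNS}_P(o))]$. Augmentation: for a non-empty SD $P$ on $\mathcal{I}$, $\mathrm{DI}(P)$ is the distribution on $\mathcal{I}\cup\{0\}$ with $\mathrm{DI}(P)(0)=u(P)$ and $\mathrm{DI}(P)(i)=P(i)$ for $i\in\mathcal{I}$. Bounded KL: $\mathrm{KL}_b(P\|Q):=\sum_{i\in\sup(P)}P(i)\ln\frac{P(i)}{\max(Q(i),p_{NS})}$, and $\mathrm{KL}_{NS}(P\|Q):=\mathrm{KL}_b(\mathrm{DI}(P)\,\|\,\mathrm{DI}(\mathrm{FC}(Q)))$. *)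

theory Defs
  imports Complex_Main
begin

text \<open>A semi-distribution is a function \<open>nat \<Rightarrow> real\<close>,
 of which only the values on \<open>{1..k}\<close> matter. Observations are \<open>nat option\<close>:
 \<open>Some i\<close> is the item i, \<open>None\<close> is a (fresh) noise item, not in \<open>{1..k}\<close>.\<close>

definition is_SD :: "nat \<Rightarrow> (nat \<Rightarrow> real) \<Rightarrow> bool" where
  "is_SD k W \<longleftrightarrow> (\<forall>i\<in>{1..k}. 0 \<le> W i \<and> W i \<le> 1) \<and> (\<Sum>i\<in>{1..k}. W i) \<le> 1"

definition aSD :: "nat \<Rightarrow> (nat \<Rightarrow> real) \<Rightarrow> real" where
  "aSD k W = (\<Sum>i\<in>{1..k}. W i)"

definition uSD :: "nat \<Rightarrow> (nat \<Rightarrow> real) \<Rightarrow> real" where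
  "uSD k W = 1 - aSD k W"

definition supSD :: "nat \<Rightarrow> (nat \<Rightarrow> real) \<Rightarrow> nat set" where
  "supSD k W = {i\<in>{1..k}. W i > 0}"

definition ScaleDrop :: "(nat \<Rightarrow> real) \<Rightarrow> real \<Rightarrow> real \<Rightarrow> (nat \<Rightarrow> real)" where
  "ScaleDrop W \<alpha> pmin = (\<lambda>i. if \<alpha> * W i \<ge> pmin then \<alpha> * W i else 0)"

definition FC :: "nat \<Rightarrow> real \<Rightarrow> real \<Rightarrow> (nat \<Rightarrow> real) \<Rightarrow> (nat \<Rightarrow> real)" where
  "FC k pNS pmin W =
     (let W' = ScaleDrop W 1 pmin in
      if aSD k W' \<le> 1 - pNS then W'
      else ScaleDrop W' ((1 - pNS) / aSD k W') pmin)"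

definition isNS :: "nat \<Rightarrow> (nat \<Rightarrow> real) \<Rightarrow> nat option \<Rightarrow> bool" where
  "isNS k P o' = (case o' of None \<Rightarrow> True | Some i \<Rightarrow> i \<notin> supSD k P)"

definition loglossRuleNS ::
  "nat \<Rightarrow> real \<Rightarrow> real \<Rightarrow> nat option \<Rightarrow> (nat \<Rightarrow> real) \<Rightarrow> bool \<Rightarrow> real" where
  "loglossRuleNS k pNS pmin o' W m =
     (let W' = FC k pNS pmin W;
          p = (case o' of None \<Rightarrow> 0 | Some i \<Rightarrow> if i \<in> {1..k} then W' i else 0)
      in if p > 0 then - ln p
         else if \<not> m then - ln pNS
         else - ln (uSD k W'))"

text \<open>Expectation over \<open>o \<sim> P\<close>: item i has probability \<open>a(P) \<cdot> P(i)/a(P) = P(i)\<close>,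
  a fresh noise item has probability \<open>u(P)\<close>.\<close>
definition LogLossNS :: "nat \<Rightarrow> real \<Rightarrow> real \<Rightarrow> (nat \<Rightarrow> real) \<Rightarrow> (nat \<Rightarrow> real) \<Rightarrow> real" where
  "LogLossNS k pNS pmin Q P =
     (\<Sum>i\<in>{1..k}. P i * loglossRuleNS k pNS pmin (Some i) Q (isNS k P (Some i)))
     + uSD k P * loglossRuleNS k pNS pmin None Q (isNS k P None)"

definition DI :: "nat \<Rightarrow> (nat \<Rightarrow> real) \<Rightarrow> (nat \<Rightarrow> real)" where
  "DI k P = (\<lambda>i. if i = 0 then uSD k P else P i)"

definition entropy :: "nat set \<Rightarrow> (nat \<Rightarrow> real) \<Rightarrow> real" where
  "entropy S D = - (\<Sum>i\<in>{i\<in>S. D i \<noteq> 0}. D i * ln (D i))"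

definition KL_b :: "real \<Rightarrow> nat set \<Rightarrow> (nat \<Rightarrow> real) \<Rightarrow> (nat \<Rightarrow> real) \<Rightarrow> real" where
  "KL_b pNS S P Q = (\<Sum>i\<in>{i\<in>S. P i > 0}. P i * ln (P i / max (Q i) pNS))"

definition KL_NS :: "nat \<Rightarrow> real \<Rightarrow> real \<Rightarrow> (nat \<Rightarrow> real) \<Rightarrow> (nat \<Rightarrow> real) \<Rightarrow> real" where
  "KL_NS k pNS pmin P Q = KL_b pNS {0..k} (DI k P) (DI k (FC k pNS pmin Q))"

end

theory Submission
  imports Defs
begin

lemma SD_nonneg: "0 < pmin \<Longrightarrow> ScaleDrop W a pmin i = 0 \<or> ScaleDrop W a pmin i \<ge> pmin"
  unfolding ScaleDrop_def by auto

lemma FC_vals: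
  assumes "0 < pmin"
  shows "FC k pNS pmin Q i = 0 \<or> FC k pNS pmin Q i \<ge> pmin"
  unfolding FC_def Let_def using SD_nonneg[OF assms] by auto

lemma FC_sum:
  assumes "0 < pmin" "pNS < 1"
  shows "aSD k (FC k pNS pmin Q) \<le> 1 - pNS"
proof (cases "aSD k (ScaleDrop Q 1 pmin) \<le> 1 - pNS")
  case True
  then show ?thesis unfolding FC_def Let_def by simp
next
  case False
  define W1 where "W1 = ScaleDrop Q 1 pmin"
  define a where "a = (1 - pNS) / aSD k W1"
  have pos: "aSD k W1 > 0" using False assms unfolding W1_def by linarith
  have nn: "\<And>i. W1 i \<ge> 0" using SD_nonneg[OF assms(1)] assms(1) unfolding W1_def
    by (metis order.trans less_imp_le order_refl)
  have a0: "a \<ge> 0" unfolding a_def using pos assms by simp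
  have "aSD k (ScaleDrop W1 a pmin) \<le> (\<Sum>i\<in>{1..k}. a * W1 i)"
    unfolding aSD_def ScaleDrop_def
    by (rule sum_mono) (use a0 nn in \<open>auto intro: mult_nonneg_nonneg\<close>)
  also have "\<dots> = a * aSD k W1" unfolding aSD_def by (simp add: sum_distrib_left)
  also have "\<dots> = 1 - pNS" unfolding a_def using pos by simp
  finally show ?thesis using False unfolding FC_def Let_def W1_def a_def by simp
qed

theorem lemma5:
  fixes k :: nat and pNS pmin :: real and P Q :: "nat \<Rightarrow> real"
  assumes "pNS = pmin" and "0 < pNS" and "pNS < 1"
    and "is_SD k P" and "is_SD k Q" and "aSD k P > 0"
  shows "LogLossNS k pNS pmin Q P = entropy {0..k} (DI k P) + KL_NS k pNS pmin P Q"
proof -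
  define W where "W = FC k pNS pmin Q"
  define D where "D = DI k P"
  define DW where "DW = DI k W"
  have pm: "0 < pmin" using assms by simp
  have Wv: "\<And>i. W i = 0 \<or> W i \<ge> pNS" using FC_vals[OF pm] assms(1) unfolding W_def by metis
  have uW: "uSD k W \<ge> pNS" using FC_sum[OF pm assms(3), of k Q] unfolding W_def uSD_def by simp
  have Pnn: "\<And>i. i \<in> {1..k} \<Longrightarrow> P i \<ge> 0" using assms(4) unfolding is_SD_def by auto
  have uP: "uSD k P \<ge> 0" using assms(4) unfolding is_SD_def uSD_def aSD_def by simp
  have Dnn: "\<And>i. i \<in> {0..k} \<Longrightarrow> D i \<ge> 0" using Pnn uP unfolding D_def DI_def by auto
  define g where "g i = - D i * ln (max (DW i) pNS)" for i
  have rule_some: "P i * loglossRuleNS k pNS pmin (Some i) Q (isNS k P (Some i)) = g i"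
    if "i \<in> {1..k}" for i
  proof (cases "P i > 0")
    case True
    then have "\<not> isNS k P (Some i)" using that unfolding isNS_def supSD_def by auto
    moreover have "i \<noteq> 0" using that by auto
    ultimately show ?thesis using that Wv[of i] assms(2) unfolding loglossRuleNS_def g_def D_def DW_def DI_def W_def[symmetric]
      by (auto simp: Let_def max_def)
  next
    case False
    then have "P i = 0" using Pnn that by force
    moreover have "i \<noteq> 0" using that by auto
    ultimately show ?thesis unfolding g_def D_def DI_def by simp
  qed
  have rule_none: "uSD k P * loglossRuleNS k pNS pmin None Q (isNS k P None) = g 0"
    using uW assms(2) unfolding loglossRuleNS_def isNS_def g_def D_def DW_def DI_def W_def[symmetric]
    by (simp add: Let_def max_def)
  have L: "LogLossNS k pNS pmin Q P = (\<Sum>i\<in>{1..k}. g i) + g 0"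
    unfolding LogLossNS_def using rule_some rule_none by simp
  have Dset: "{i\<in>{0..k}. D i \<noteq> 0} = {i\<in>{0..k}. D i > 0}" using Dnn by force
  have R: "entropy {0..k} D + KL_b pNS {0..k} D DW = (\<Sum>i\<in>{i\<in>{0..k}. D i > 0}. g i)"
    unfolding entropy_def KL_b_def Dset
  proof -
    have "\<And>i. i \<in> {i\<in>{0..k}. D i > 0} \<Longrightarrow> D i * ln (D i / max (DW i) pNS) = D i * ln (D i) + g i"
    proof -
      fix i assume "i \<in> {i\<in>{0..k}. D i > 0}"
      then have d: "D i > 0" by simp
      have m: "max (DW i) pNS > 0" using assms(2) by simp
      show "D i * ln (D i / max (DW i) pNS) = D i * ln (D i) + g i"
        unfolding g_def using d m by (simp add: ln_div algebra_simps)
    qed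
    then have "(\<Sum>i\<in>{i\<in>{0..k}. D i > 0}. D i * ln (D i / max (DW i) pNS))
        = (\<Sum>i\<in>{i\<in>{0..k}. D i > 0}. D i * ln (D i)) + (\<Sum>i\<in>{i\<in>{0..k}. D i > 0}. g i)"
      by (simp add: sum.distrib)
    then show "- (\<Sum>i\<in>{i \<in> {0..k}. 0 < D i}. D i * ln (D i)) +
      (\<Sum>i\<in>{i \<in> {0..k}. 0 < D i}. D i * ln (D i / max (DW i) pNS)) =
      (\<Sum>i\<in>{i \<in> {0..k}. 0 < D i}. g i)" by simp
  qed
  have "(\<Sum>i\<in>{i\<in>{0..k}. D i > 0}. g i) = (\<Sum>i\<in>{0..k}. if D i > 0 then g i else 0)"
    by (rule sum.inter_filter) simp
  also have "\<dots> = (\<Sum>i\<in>{0..k}. g i)"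
    by (rule sum.cong) (use Dnn in \<open>auto simp: g_def\<close>, metis order.order_iff_strict mult_zero_left neg_0_equal_iff_equal)
  also have "\<dots> = g 0 + (\<Sum>i\<in>{1..k}. g i)" by (simp add: sum.atLeast_Suc_atMost)
  finally show ?thesis using L R unfolding KL_NS_def D_def DW_def W_def by simp
qed

end
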